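(* For every $m\ge3$, the $m$-candidate anti-plurality rule (score vector $(1,\dots,1,0)$) is not dominated by any other $m$-candidate positional rule.
   Context: For an $m$-candidate positional rule with score vector $w=(w_1,\dots,w_m)$, $1=w_1\ge\cdots\ge w_m=0$, let $\bar w=\frac1m\sum_iw_i$, $\sigma_w^2=\frac1m\sum_iw_i^2-\bar w^2$, $M_w=\{(\lambda,\mu):0\le\lambda\le\mu,\ w_{i+1}\lambda+(1-w_i)\mu\le1,\ i=1,\dots,m-1\}$, and $V_w=\sup\{\lambda(\rho_1(Z)-\bar Z)+\mu(\bar Z-\rho_2(Z)):(\lambda,\mu)\in\sigma_w(\frac{m}{m-1})^{1/2}M_w\}\in[0,\infty]$, where $Z=(Z_1,\dots,Z_m)$ has independent standard normal entries, $\bar Z$ is their mean and $\rho_j(Z)$ the $j$-th largest entry. (Under Impartial Culture, $V_w$ is the limiting distribution of the minimum manipulating coalition size divided by $\sqrt n$.) Let $g_w(v)=\mathbb P(V_w\le v)$. A rule $w$ dominates a rule $w'$ if $g_w(v)\le g_{w'}(v)$ for all $v\ge0$. *)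

theory Defs
  imports "HOL-Probability.Probability"
begin

text \<open>Score vectors are indexed 1..m (functions nat => real; values outside 1..m irrelevant).\<close>

definition is_score_vector :: "nat \<Rightarrow> (nat \<Rightarrow> real) \<Rightarrow> bool" where
  "is_score_vector m w \<longleftrightarrow> w 1 = 1 \<and> w m = 0 \<and> (\<forall>i\<in>{1..<m}. w (Suc i) \<le> w i)"

definition antiplurality :: "nat \<Rightarrow> nat \<Rightarrow> real" where
  "antiplurality m i = (if i < m then 1 else 0)"

definition wbar :: "nat \<Rightarrow> (nat \<Rightarrow> real) \<Rightarrow> real" where
  "wbar m w = (\<Sum>i=1..m. w i) / real m"

definition sigma_w :: "nat \<Rightarrow> (nat \<Rightarrow> real) \<Rightarrow> real" where
  "sigma_w m w = sqrt ((\<Sum>i=1..m. (w i)\<^sup>2) / real m - (wbar m w)\<^sup>2)"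

definition M_w :: "nat \<Rightarrow> (nat \<Rightarrow> real) \<Rightarrow> (real \<times> real) set" where
  "M_w m w = {(la, mu). 0 \<le> la \<and> la \<le> mu \<and>
      (\<forall>i\<in>{1..<m}. w (Suc i) * la + (1 - w i) * mu \<le> 1)}"

definition zbar :: "nat \<Rightarrow> (nat \<Rightarrow> real) \<Rightarrow> real" where
  "zbar m z = (\<Sum>i=1..m. z i) / real m"

definition rho :: "nat \<Rightarrow> nat \<Rightarrow> (nat \<Rightarrow> real) \<Rightarrow> real" where
  "rho m j z = rev (sort (map z [1..<Suc m])) ! (j - 1)"

definition V_w :: "nat \<Rightarrow> (nat \<Rightarrow> real) \<Rightarrow> (nat \<Rightarrow> real) \<Rightarrow> ereal" where
  "V_w m w z = (SUP p \<in> (\<lambda>(la, mu). (sigma_w m w * sqrt (real m / (real m - 1)) * la,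
                                   sigma_w m w * sqrt (real m / (real m - 1)) * mu)) ` M_w m w.
       ereal (fst p * (rho m 1 z - zbar m z) + snd p * (zbar m z - rho m 2 z)))"

definition gauss_vec :: "nat \<Rightarrow> (nat \<Rightarrow> real) measure" where
  "gauss_vec m = PiM {1..m} (\<lambda>_. density lborel std_normal_density)"

definition g_w :: "nat \<Rightarrow> (nat \<Rightarrow> real) \<Rightarrow> real \<Rightarrow> real" where
  "g_w m w v = measure (gauss_vec m) {z \<in> space (gauss_vec m). V_w m w z \<le> ereal v}"

definition dominates :: "nat \<Rightarrow> (nat \<Rightarrow> real) \<Rightarrow> (nat \<Rightarrow> real) \<Rightarrow> bool" where
  "dominates m w w' \<longleftrightarrow> (\<forall>v\<ge>0. g_w m w v \<le> g_w m w' v)"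

end

theory Submission imports Defs begin


abbreviation NN :: "real measure" where "NN \<equiv> density lborel std_normal_density"

lemma NN_prob: "prob_space NN" using prob_space_normal_density[of 1 0] by simp

lemma sets_NN[simp]: "sets NN = sets borel" by simp
lemma space_NN[simp]: "space NN = UNIV" by simp

lemma gauss_prob: "prob_space (gauss_vec m)"
  unfolding gauss_vec_def by (rule prob_space_PiM) (rule NN_prob)

lemma space_gauss: "space (gauss_vec m) = PiE {1..m} (\<lambda>_. UNIV)"
  unfolding gauss_vec_def by (simp add: space_PiM)

lemma comp_meas[measurable]: "i \<in> {1..m} \<Longrightarrow> (\<lambda>z. z i) \<in> borel_measurable (gauss_vec m)"
proof -
  assume "i \<in> {1..m}"
  then have "(\<lambda>z. z i) \<in> measurable (PiM {1..m} (\<lambda>_. NN)) NN" by (rule measurable_component_singleton)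
  also have "measurable (PiM {1..m} (\<lambda>_. NN)) NN = borel_measurable (PiM {1..m} (\<lambda>_. NN))"
    by (rule measurable_cong_sets) auto
  finally show ?thesis unfolding gauss_vec_def .
qed

lemma ps: "product_sigma_finite (\<lambda>_::nat. NN)"
proof -
  interpret prob_space NN by (rule NN_prob)
  show ?thesis unfolding product_sigma_finite_def by (auto intro: sigma_finite_measure_axioms)
qed

lemma measure_box:
  assumes "\<And>i. A i \<in> sets borel"
  shows "measure (gauss_vec m) (PiE {1..m} A) = (\<Prod>i\<in>{1..m}. measure NN (A i))"
proof -
  interpret product_sigma_finite "\<lambda>_::nat. NN" by (rule ps)
  interpret prob_space NN by (rule NN_prob)
  have "emeasure (gauss_vec m) (PiE {1..m} A) = (\<Prod>i\<in>{1..m}. emeasure NN (A i))"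
    unfolding gauss_vec_def using assms by (subst emeasure_PiM) auto
  also have "\<dots> = (\<Prod>i\<in>{1..m}. ennreal (measure NN (A i)))"
    by (simp add: emeasure_eq_measure)
  also have "\<dots> = ennreal (\<Prod>i\<in>{1..m}. measure NN (A i))"
    by (simp add: prod_ennreal)
  finally show ?thesis unfolding measure_def by (simp add: prod_nonneg)
qed

lemma nd_ne0[simp]: "std_normal_density x \<noteq> 0" using normal_density_pos[of 1 0 x] by simp

lemma NN_Icc_pos:
  assumes "a < b" shows "0 < measure NN {a..b}"
proof -
  interpret prob_space NN by (rule NN_prob)
  have "{a..b} \<notin> null_sets NN"
  proof
    assume "{a..b} \<in> null_sets NN"
    then have "AE x in lborel. x \<in> {a..b} \<longrightarrow> std_normal_density x = 0"
      by (subst (asm) null_sets_density_iff) auto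
    then have "AE x in lborel. x \<notin> {a..b}"
      by (rule AE_mp) (auto intro!: AE_I2)
    then have "{a..b} \<in> null_sets lborel"
      by (subst AE_iff_null_sets) auto
    then show False using assms by (simp add: emeasure_lborel_Icc null_sets_def)
  qed
  then show ?thesis
    by (simp add: measure_le_0_iff emeasure_eq_measure null_sets_def order_less_le)
qed



lemma rsort_le_iff:
  fixes xs :: "real list"
  assumes k: "k < length xs"
  shows "rev (sort xs) ! k \<le> t \<longleftrightarrow> length (filter (\<lambda>x. t < x) xs) \<le> k"
proof -
  define ys where "ys = sort xs"
  define n where "n = length xs"
  define idx where "idx = n - 1 - k"
  have len: "length ys = n" by (simp add: ys_def n_def)
  have sy: "sorted ys" by (simp add: ys_def)
  have idx: "idx < n" "rev ys ! k = ys ! idx" using k len by (auto simp: idx_def n_def rev_nth)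
  have cnt: "length (filter (\<lambda>x. t < x) xs) = card {j. j < n \<and> t < ys ! j}"
  proof -
    have "length (filter (\<lambda>x. t < x) xs) = length (filter (\<lambda>x. t < x) ys)"
      unfolding ys_def by (metis mset_filter mset_sort size_mset)
    then show ?thesis by (simp add: length_filter_conv_card len)
  qed
  show ?thesis
  proof
    assume "rev (sort xs) ! k \<le> t"
    then have le: "ys ! idx \<le> t" using idx by (simp add: ys_def)
    have "{j. j < n \<and> t < ys ! j} \<subseteq> {idx<..<n}"
    proof
      fix j assume "j \<in> {j. j < n \<and> t < ys ! j}"
      then have j: "j < n" "t < ys ! j" by auto
      have "idx < j"
      proof (rule ccontr)
        assume "\<not> idx < j"
        then have "ys ! j \<le> ys ! idx" using sy idx j len by (auto intro: sorted_nth_mono)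
        then show False using le j by simp
      qed
      then show "j \<in> {idx<..<n}" using j by auto
    qed
    then have "card {j. j < n \<and> t < ys ! j} \<le> card {idx<..<n}" by (rule card_mono[rotated]) auto
    also have "\<dots> = k" using k by (simp add: idx_def n_def)
    finally show "length (filter (\<lambda>x. t < x) xs) \<le> k" using cnt by simp
  next
    assume h: "length (filter (\<lambda>x. t < x) xs) \<le> k"
    show "rev (sort xs) ! k \<le> t"
    proof (rule ccontr)
      assume "\<not> rev (sort xs) ! k \<le> t"
      then have gt: "t < ys ! idx" using idx by (simp add: ys_def)
      have "{idx..<n} \<subseteq> {j. j < n \<and> t < ys ! j}"
      proof
        fix j assume "j \<in> {idx..<n}"
        then have "ys ! idx \<le> ys ! j" using sy len by (auto intro: sorted_nth_mono)
        then show "j \<in> {j. j < n \<and> t < ys ! j}" using gt \<open>j \<in> {idx..<n}\<close> by auto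
      qed
      then have "card {idx..<n} \<le> card {j. j < n \<and> t < ys ! j}" by (rule card_mono[rotated]) auto
      moreover have "card {idx..<n} = k + 1" using k by (simp add: idx_def n_def)
      ultimately show False using h cnt by simp
    qed
  qed
qed

lemma len_filter_sum: "length (filter P xs) = (\<Sum>x\<leftarrow>xs. if P x then 1 else 0)"
  by (induction xs) auto

lemma rho_le_iff:
  assumes "1 \<le> j" "j \<le> m"
  shows "rho m j z \<le> t \<longleftrightarrow> (\<Sum>i\<in>{1..m}. if t < z i then 1 else 0::real) \<le> real (j - 1)"
proof -
  have "rho m j z \<le> t \<longleftrightarrow> length (filter (\<lambda>x. t < x) (map z [1..<Suc m])) \<le> j - 1"
    unfolding rho_def using assms by (intro rsort_le_iff) auto
  also have "length (filter (\<lambda>x. t < x) (map z [1..<Suc m])) = (\<Sum>i\<in>{1..m}. if t < z i then 1 else 0::nat)"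
  proof -
    have "length (filter (\<lambda>x. t < x) (map z [1..<Suc m])) = (\<Sum>i\<leftarrow>[1..<Suc m]. if t < z i then 1 else 0)"
      by (simp only: len_filter_sum map_map comp_def)
    also have "\<dots> = (\<Sum>i\<in>set [1..<Suc m]. if t < z i then 1 else 0)"
      by (rule sum_set_upt_conv_sum_list_nat[symmetric])
    also have "set [1..<Suc m] = {1..m}" by auto
    finally show ?thesis .
  qed
  also have "(\<dots> \<le> j - 1) \<longleftrightarrow> real (\<Sum>i\<in>{1..m}. if t < z i then 1 else 0::nat) \<le> real (j - 1)"
    by linarith
  also have "real (\<Sum>i\<in>{1..m}. if t < z i then 1 else 0::nat) = (\<Sum>i\<in>{1..m}. if t < z i then 1 else 0::real)"
    by (auto simp: of_nat_sum intro!: sum.cong)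
  finally show ?thesis .
qed

lemma rho_in:
  assumes "1 \<le> j" "j \<le> m"
  shows "\<exists>i\<in>{1..m}. rho m j z = z i"
proof -
  have "rho m j z \<in> set (rev (sort (map z [1..<Suc m])))"
    unfolding rho_def using assms by (intro nth_mem) auto
  then show ?thesis by auto
qed

lemma rho_meas[measurable]:
  assumes "1 \<le> j" "j \<le> m"
  shows "rho m j \<in> borel_measurable (gauss_vec m)"
proof (subst borel_measurable_iff_le, intro allI)
  fix t
  have "{w \<in> space (gauss_vec m). rho m j w \<le> t} =
     {w \<in> space (gauss_vec m). (\<Sum>i\<in>{1..m}. if t < w i then 1 else 0::real) \<le> real (j - 1)}"
    using rho_le_iff[OF assms] by auto
  also have "\<dots> \<in> sets (gauss_vec m)" by measurable
  finally show "{w \<in> space (gauss_vec m). rho m j w \<le> t} \<in> sets (gauss_vec m)" .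
qed

lemma zbar_meas[measurable]: "zbar m \<in> borel_measurable (gauss_vec m)"
  unfolding zbar_def by measurable



lemma V_le_iff:
  "V_w m w z \<le> ereal v \<longleftrightarrow>
   (\<forall>p\<in>M_w m w. sigma_w m w * sqrt (real m / (real m - 1)) * fst p * (rho m 1 z - zbar m z)
        + sigma_w m w * sqrt (real m / (real m - 1)) * snd p * (zbar m z - rho m 2 z) \<le> v)"
  unfolding V_w_def SUP_le_iff by (auto simp: split_beta)

lemma V_ge:
  assumes "p \<in> M_w m w"
  shows "ereal (sigma_w m w * sqrt (real m / (real m - 1)) * fst p * (rho m 1 z - zbar m z)
        + sigma_w m w * sqrt (real m / (real m - 1)) * snd p * (zbar m z - rho m 2 z)) \<le> V_w m w z"
  unfolding V_w_def
  by (rule SUP_upper2[OF imageI[OF assms]]) (simp add: split_beta)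

lemma S_meas:
  assumes "2 \<le> m"
  shows "{z \<in> space (gauss_vec m). V_w m w z \<le> ereal v} \<in> sets (gauss_vec m)"
proof -
  define c where "c = sigma_w m w * sqrt (real m / (real m - 1))"
  define K where "K = (\<Inter>p\<in>M_w m w. {q::real\<times>real. c * fst p * fst q + c * snd p * snd q \<le> v})"
  define \<Phi> where "\<Phi> = (\<lambda>z. (rho m 1 z - zbar m z, zbar m z - rho m 2 z))"
  have "closed K" unfolding K_def
    by (intro closed_INT ballI closed_Collect_le continuous_intros)
  then have Kb: "K \<in> sets borel" by (rule borel_closed)
  have "\<Phi> \<in> borel_measurable (gauss_vec m)" unfolding \<Phi>_def
    using rho_meas[of 1 m] rho_meas[of 2 m] assms
    by (intro borel_measurable_Pair borel_measurable_diff zbar_meas) auto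
  from measurable_sets[OF this Kb] have "\<Phi> -` K \<inter> space (gauss_vec m) \<in> sets (gauss_vec m)" .
  also have "\<Phi> -` K \<inter> space (gauss_vec m) = {z \<in> space (gauss_vec m). V_w m w z \<le> ereal v}"
    unfolding V_le_iff K_def \<Phi>_def c_def by fastforce
  finally show ?thesis .
qed

lemma score_mono:
  assumes "is_score_vector m w" "1 \<le> i" "i \<le> j" "j \<le> m"
  shows "w j \<le> w i"
proof -
  have "j \<le> m \<longrightarrow> w j \<le> w i" using assms(3)
  proof (induction j rule: dec_induct)
    case base then show ?case by simp
  next
    case (step n)
    then show ?case using assms(1,2) unfolding is_score_vector_def
      by (metis Suc_leD atLeastLessThan_iff le_trans less_eq_Suc_le order_trans)
  qed
  then show ?thesis using assms by simp
qed

lemma wm1_lt: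
  assumes m: "m \<ge> 3" and sv: "is_score_vector m w"
    and ne: "\<exists>i\<in>{1..m}. w i \<noteq> antiplurality m i"
  shows "w (m - 1) < 1"
proof (rule ccontr)
  assume "\<not> w (m - 1) < 1"
  then have h: "w (m - 1) \<ge> 1" by simp
  have "\<forall>i\<in>{1..m}. w i = antiplurality m i"
  proof
    fix i assume i: "i \<in> {1..m}"
    show "w i = antiplurality m i"
    proof (cases "i = m")
      case True then show ?thesis using sv by (simp add: is_score_vector_def antiplurality_def)
    next
      case False
      then have "w i \<le> w 1" using score_mono[OF sv, of 1 i] i by auto
      moreover have "w (m - 1) \<le> w i" using score_mono[OF sv, of i "m - 1"] i False by auto
      ultimately show ?thesis using sv h False i by (auto simp: is_score_vector_def antiplurality_def)
    qed
  qed
  then show False using ne by auto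
qed

lemma M_bound:
  assumes m: "m \<ge> 3" and sv: "is_score_vector m w" and d: "w (m - 1) < 1"
    and p: "(la, mu) \<in> M_w m w"
  shows "0 \<le> la" "la \<le> mu" "mu \<le> 1 / (1 - w (m - 1))"
proof -
  show "0 \<le> la" "la \<le> mu" using p by (auto simp: M_w_def)
  have "m - 1 \<in> {1..<m}" using m by auto
  moreover have "\<forall>i\<in>{1..<m}. w (Suc i) * la + (1 - w i) * mu \<le> 1" using p by (simp add: M_w_def)
  ultimately have "w (Suc (m - 1)) * la + (1 - w (m - 1)) * mu \<le> 1" by blast
  moreover have "Suc (m - 1) = m" using m by simp
  ultimately have "(1 - w (m - 1)) * mu \<le> 1" using sv by (simp add: is_score_vector_def)
  then show "mu \<le> 1 / (1 - w (m - 1))" using d by (simp add: field_simps mult.commute)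
qed

lemma zbar_bound:
  assumes "m > 0" "\<And>i. i \<in> {1..m} \<Longrightarrow> \<bar>z i\<bar> \<le> R"
  shows "\<bar>zbar m z\<bar> \<le> R"
proof -
  have "\<bar>\<Sum>i=1..m. z i\<bar> \<le> (\<Sum>i=1..m. \<bar>z i\<bar>)" by (rule sum_abs)
  also have "\<dots> \<le> (\<Sum>i=1..m. R)" using assms by (intro sum_mono) auto
  also have "\<dots> = real m * R" by simp
  finally show ?thesis using assms(1) unfolding zbar_def by (simp add: field_simps)
qed

lemma rho_bound:
  assumes "1 \<le> j" "j \<le> m" "\<And>i. i \<in> {1..m} \<Longrightarrow> \<bar>z i\<bar> \<le> R"
  shows "\<bar>rho m j z\<bar> \<le> R"
  using rho_in[OF assms(1,2), of z] assms(3) by auto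



lemma ap_sum: assumes "m \<ge> 1" shows "(\<Sum>i=1..m. antiplurality m i) = real m - 1"
    "(\<Sum>i=1..m. (antiplurality m i)\<^sup>2) = real m - 1"
proof -
  have e: "{1..m} = insert m {1..<m}" using assms by auto
  show "(\<Sum>i=1..m. antiplurality m i) = real m - 1"
    unfolding e using assms by (simp add: antiplurality_def of_nat_diff)
  show "(\<Sum>i=1..m. (antiplurality m i)\<^sup>2) = real m - 1"
    unfolding e using assms by (simp add: antiplurality_def of_nat_diff)
qed

lemma sigma_ap_pos: assumes "m \<ge> 2" shows "sigma_w m (antiplurality m) > 0"
proof -
  define q where "q = (real m - 1) / real m"
  have q: "0 < q" "q < 1" using assms by (auto simp: q_def field_simps)
  have m1: "m \<ge> 1" using assms by simp
  have "sigma_w m (antiplurality m) = sqrt (q - q\<^sup>2)"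
    unfolding sigma_w_def wbar_def ap_sum[OF m1] q_def by simp
  moreover have "q - q\<^sup>2 > 0" using q by (simp add: power2_eq_square mult_less_cancel_left1)
  ultimately show ?thesis by simp
qed

lemma ap_in_M: "mu \<ge> 0 \<Longrightarrow> (0, mu) \<in> M_w m (antiplurality m)"
  by (auto simp: M_w_def antiplurality_def)

lemma AP_big:
  assumes m: "m \<ge> 3"
    and z: "z \<in> PiE {1..m} (\<lambda>i. if i = 1 then {2 * real m..2 * real m + 1} else {0..1})"
  shows "\<not> V_w m (antiplurality m) z \<le> ereal v"
proof -
  define c where "c = sigma_w m (antiplurality m) * sqrt (real m / (real m - 1))"
  have cpos: "c > 0" unfolding c_def using sigma_ap_pos[of m] m by auto
  have r2: "rho m 2 z \<le> 1"
  proof -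
    have "(\<Sum>i\<in>{1..m}. if 1 < z i then 1 else 0::real) \<le> (\<Sum>i\<in>{1..m}. if i = 1 then 1 else 0)"
    proof (intro sum_mono)
    fix i assume i: "i \<in> {1..m}"
    have "z i \<in> (if i = 1 then {2 * real m..2 * real m + 1} else {0..1})" using z i by (simp add: PiE_iff)
    then show "(if 1 < z i then 1 else 0::real) \<le> (if i = 1 then 1 else 0)"
      by (cases "i = 1") auto
  qed
    also have "\<dots> = 1" using m by simp
    finally show ?thesis using rho_le_iff[of 2 m z 1] m by simp
  qed
  have "z 1 \<le> (\<Sum>i=1..m. z i)"
    using z m by (intro member_le_sum) (auto simp: PiE_iff split: if_splits)
  moreover have "z 1 \<ge> 2 * real m"
  proof -
    have "z 1 \<in> (if (1::nat) = 1 then {2 * real m..2 * real m + 1} else {0..1})"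
      using PiE_mem[OF z, of 1] m by simp
    then show ?thesis by simp
  qed
  ultimately have "zbar m z \<ge> 2" unfolding zbar_def using m by (simp add: field_simps)
  then have b: "zbar m z - rho m 2 z \<ge> 1" using r2 by simp
  define mu where "mu = (\<bar>v\<bar> + 1) / (c * (zbar m z - rho m 2 z))"
  have mu0: "mu \<ge> 0" unfolding mu_def using cpos b by simp
  have "ereal (c * fst (0::real, mu) * (rho m 1 z - zbar m z) + c * snd (0::real, mu) * (zbar m z - rho m 2 z))
      \<le> V_w m (antiplurality m) z"
    unfolding c_def by (rule V_ge[OF ap_in_M[OF mu0]])
  moreover have "c * fst (0::real, mu) * (rho m 1 z - zbar m z) + c * snd (0::real, mu) * (zbar m z - rho m 2 z) = \<bar>v\<bar> + 1"
    unfolding mu_def using cpos b by (simp add: field_simps)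
  ultimately have "ereal (\<bar>v\<bar> + 1) \<le> V_w m (antiplurality m) z" by simp
  then show ?thesis by (metis abs_ge_self ereal_less_eq(3) less_add_one linorder_not_le order.strict_trans2 order_trans)
qed

lemma W_small:
  assumes m: "m \<ge> 3" and sv: "is_score_vector m w" and d: "w (m - 1) < 1" and R: "R \<ge> 0"
    and z: "\<And>i. i \<in> {1..m} \<Longrightarrow> \<bar>z i\<bar> \<le> R"
  shows "V_w m w z \<le> ereal (\<bar>sigma_w m w * sqrt (real m / (real m - 1))\<bar> * 4 * R / (1 - w (m - 1)))"
proof -
  define c where "c = sigma_w m w * sqrt (real m / (real m - 1))"
  define U where "U = 1 / (1 - w (m - 1))"
  have U0: "U \<ge> 0" unfolding U_def using d by simp
  have a: "\<bar>rho m 1 z - zbar m z\<bar> \<le> 2 * R"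
    using rho_bound[of 1 m z R] zbar_bound[of m z R] z m by fastforce
  have b: "\<bar>zbar m z - rho m 2 z\<bar> \<le> 2 * R"
    using rho_bound[of 2 m z R] zbar_bound[of m z R] z m by fastforce
  have "\<forall>p\<in>M_w m w. c * fst p * (rho m 1 z - zbar m z) + c * snd p * (zbar m z - rho m 2 z) \<le> \<bar>c\<bar> * 4 * R * U"
  proof
    fix p assume p: "p \<in> M_w m w"
    obtain la mu where pe: "p = (la, mu)" by force
    have l: "0 \<le> la" "la \<le> mu" "mu \<le> U" using M_bound[OF m sv d, of la mu] p pe U_def by auto
    have "c * la * (rho m 1 z - zbar m z) \<le> \<bar>c\<bar> * la * \<bar>rho m 1 z - zbar m z\<bar>"
      using l by (metis abs_ge_self abs_mult abs_of_nonneg)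
    also have "\<dots> \<le> \<bar>c\<bar> * la * (2 * R)"
      using a l by (intro mult_left_mono) auto
    also have "\<dots> \<le> \<bar>c\<bar> * U * (2 * R)" using l R by (intro mult_right_mono mult_left_mono) auto
    finally have 1: "c * la * (rho m 1 z - zbar m z) \<le> \<bar>c\<bar> * U * (2 * R)" .
    have "c * mu * (zbar m z - rho m 2 z) \<le> \<bar>c\<bar> * mu * \<bar>zbar m z - rho m 2 z\<bar>"
      using l by (metis abs_ge_self abs_mult abs_of_nonneg order_trans)
    also have "\<dots> \<le> \<bar>c\<bar> * mu * (2 * R)"
      using b l by (intro mult_left_mono) auto
    also have "\<dots> \<le> \<bar>c\<bar> * U * (2 * R)" using l R by (intro mult_right_mono mult_left_mono) auto
    finally have 2: "c * mu * (zbar m z - rho m 2 z) \<le> \<bar>c\<bar> * U * (2 * R)" .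
    show "c * fst p * (rho m 1 z - zbar m z) + c * snd p * (zbar m z - rho m 2 z) \<le> \<bar>c\<bar> * 4 * R * U"
      using 1 2 pe by (simp add: algebra_simps)
  qed
  then have "V_w m w z \<le> ereal (\<bar>c\<bar> * 4 * R * U)" unfolding V_le_iff c_def by simp
  then show ?thesis unfolding c_def U_def by simp
qed



theorem proposition13:
  fixes m :: nat and w :: "nat \<Rightarrow> real"
  assumes "m \<ge> 3"
    and "is_score_vector m w"
    and "\<exists>i\<in>{1..m}. w i \<noteq> antiplurality m i"
  shows "\<not> dominates m w (antiplurality m)"
proof
  assume dom: "dominates m w (antiplurality m)"
  have m: "m \<ge> 3" and sv: "is_score_vector m w" using assms by auto
  have d: "w (m - 1) < 1" using wm1_lt[OF assms] .
  interpret P: prob_space "gauss_vec m" by (rule gauss_prob)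
  interpret N: prob_space NN by (rule NN_prob)
  define Bs where "Bs = (\<lambda>i::nat. if i = 1 then {2 * real m..2 * real m + 1} else {0..1::real})"
  define B where "B = PiE {1..m} Bs"
  have Bsets: "B \<in> sets (gauss_vec m)" unfolding B_def gauss_vec_def
    by (rule sets_PiM_I_finite) (auto simp: Bs_def)
  have muB: "measure (gauss_vec m) B > 0"
    unfolding B_def
    by (subst measure_box) (auto simp: Bs_def intro!: prod_pos NN_Icc_pos)
  define f where "f n = measure NN {- real n..real n}" for n :: nat
  have "f \<longlonglongrightarrow> measure NN (\<Union>n. {- real n..real n})"
    unfolding f_def
    by (rule Lim_measure_incseq) (auto simp: incseq_def N.emeasure_finite)
  moreover have "(\<Union>n. {- real n..real n}) = UNIV"
  proof (intro set_eqI iffI)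
    fix x :: real
    obtain n where "\<bar>x\<bar> \<le> real n" using real_arch_simple by blast
    then have "x \<in> {- real n..real n}" by auto
    then show "x \<in> (\<Union>n. {- real n..real n})" by blast
  qed auto
  moreover have "measure NN UNIV = 1" using N.prob_space by simp
  ultimately have "f \<longlonglongrightarrow> 1" by simp
  then have "(\<lambda>n. f n ^ m) \<longlonglongrightarrow> 1 ^ m" by (rule tendsto_power)
  then have lim: "(\<lambda>n. f n ^ m) \<longlonglongrightarrow> 1" by simp
  have "1 - measure (gauss_vec m) B < 1" using muB by simp
  from order_tendstoD(1)[OF lim this] obtain n where n: "f n ^ m > 1 - measure (gauss_vec m) B"
    by (auto simp: eventually_sequentially)
  define R where "R = real n"
  define C where "C = PiE {1..m} (\<lambda>_::nat. {-R..R})"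
  have muC: "measure (gauss_vec m) C = f n ^ m"
    unfolding C_def by (subst measure_box) (auto simp: f_def R_def)
  define v where "v = \<bar>sigma_w m w * sqrt (real m / (real m - 1))\<bar> * 4 * R / (1 - w (m - 1))"
  have v0: "v \<ge> 0" unfolding v_def R_def using d by simp
  have Sw: "{z \<in> space (gauss_vec m). V_w m w z \<le> ereal v} \<in> sets (gauss_vec m)"
    using S_meas[of m w v] m by simp
  have "C \<subseteq> {z \<in> space (gauss_vec m). V_w m w z \<le> ereal v}"
  proof
    fix z assume z: "z \<in> C"
    have "z \<in> space (gauss_vec m)" using z unfolding C_def space_gauss by (auto simp: PiE_iff)
    moreover have "V_w m w z \<le> ereal v" unfolding v_def
    proof (rule W_small[OF m sv d])
      show "0 \<le> R" by (simp add: R_def)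
      fix i assume "i \<in> {1..m}"
      from PiE_mem[OF z[unfolded C_def] this] show "\<bar>z i\<bar> \<le> R" by auto
    qed
    ultimately show "z \<in> {z \<in> space (gauss_vec m). V_w m w z \<le> ereal v}" by simp
  qed
  then have gw: "f n ^ m \<le> g_w m w v"
  proof -
    from \<open>C \<subseteq> _\<close> have "measure (gauss_vec m) C \<le> measure (gauss_vec m) {z \<in> space (gauss_vec m). V_w m w z \<le> ereal v}"
      by (rule P.finite_measure_mono[OF _ Sw])
    then show ?thesis unfolding g_w_def muC .
  qed
  have "{z \<in> space (gauss_vec m). V_w m (antiplurality m) z \<le> ereal v} \<subseteq> space (gauss_vec m) - B"
    using AP_big[OF m] unfolding B_def Bs_def by auto
  then have "g_w m (antiplurality m) v \<le> measure (gauss_vec m) (space (gauss_vec m) - B)"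
    unfolding g_w_def by (rule P.finite_measure_mono) (use Bsets in auto)
  also have "\<dots> = 1 - measure (gauss_vec m) B" using P.prob_compl[OF Bsets] .
  finally have gap: "g_w m (antiplurality m) v \<le> 1 - measure (gauss_vec m) B" .
  have "g_w m w v \<le> g_w m (antiplurality m) v" using dom v0 unfolding dominates_def by simp
  then show False using gw gap n by simp
qed

end
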